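(* (i) If $\mathbf p=\{p_1,\dots,p_n\}$ is an admissible tuple and $\mathsf P=[\partial_{c[j]}p_i]_{1\le i,j\le n}$, then $\partial_k(\mathsf P)=\gamma_k(\mathsf P)$ for all $k=1,\dots,n-1$. (ii) Conversely, let $\mathsf Q=[q_{ij}]\in\mathrm{Mat}(n,\mathbb Q[\mathbf x])$ be invertible, with each $q_{ij}$ homogeneous of degree $j-i$ (so $q_{ij}=0$ if $j<i$), and with $\partial_k(\mathsf Q)=\gamma_k(\mathsf Q)$ for $k=1,\dots,n-1$. Then the tuple $\{q_{1n},\dots,q_{nn}\}$ is admissible and $q_{ij}=\partial_{c[j]}q_{in}$ for all $i,j$.
   Context: $\mathbb Q[\mathbf x]=\mathbb Q[x_1,\dots,x_n]$ with $\deg x_i=1$; $\partial_k=(1-s_k)/(x_k-x_{k+1})$ the divided difference, applied entrywise to matrices; $c[j]=s_js_{j+1}\cdots s_{n-1}$ ($c[n]=\mathrm{id}$) and $\partial_{c[j]}=\partial_j\cdots\partial_{n-1}$. A tuple $\mathbf p=\{p_1,\dots,p_n\}\subset\mathbb Q[\mathbf x]$ is admissible if each $p_j$ is symmetric in $x_1,\dots,x_{n-1}$, homogeneous of degree $n-j$, and $\partial_{c[j]}p_j\in\mathbb Q^\times$. For a matrix $A$ with $n$ columns, $\gamma_k(A)_{ij}=\delta_{j,k+1}A_{ik}$ (the $k$-th column moved to position $k+1$, other entries zero). *)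

theory Defs
  imports Complex_Main "HOL-Library.Poly_Mapping" "HOL-Combinatorics.Permutations"
begin

text \<open>Multivariate polynomials over the rationals: finitely supported maps from
monomials (exponent vectors, finitely supported nat => nat; variable x_i has index i)
to coefficients.\<close>

type_synonym mpoly = "(nat \<Rightarrow>\<^sub>0 nat) \<Rightarrow>\<^sub>0 rat"

definition Var :: "nat \<Rightarrow> mpoly" where
  "Var i = Poly_Mapping.single (Poly_Mapping.single i 1) 1"

definition const :: "rat \<Rightarrow> mpoly" where
  "const c = Poly_Mapping.single 0 c"

definition in_ring :: "nat \<Rightarrow> mpoly \<Rightarrow> bool" where
  "in_ring n p \<longleftrightarrow> (\<forall>m \<in> Poly_Mapping.keys p. \<forall>i \<in> Poly_Mapping.keys m. 1 \<le> i \<and> i \<le> n)"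

text \<open>Total degree of a monomial and homogeneity (the zero polynomial is homogeneous of every degree).\<close>
definition mdeg :: "(nat \<Rightarrow>\<^sub>0 nat) \<Rightarrow> nat" where
  "mdeg m = (\<Sum>i\<in>Poly_Mapping.keys m. Poly_Mapping.lookup m i)"

definition homogeneous :: "nat \<Rightarrow> mpoly \<Rightarrow> bool" where
  "homogeneous d p \<longleftrightarrow> (\<forall>m \<in> Poly_Mapping.keys p. mdeg m = d)"

definition rename_mono :: "(nat \<Rightarrow> nat) \<Rightarrow> (nat \<Rightarrow>\<^sub>0 nat) \<Rightarrow> (nat \<Rightarrow>\<^sub>0 nat)" where
  "rename_mono \<sigma> m = (\<Sum>i\<in>Poly_Mapping.keys m. Poly_Mapping.single (\<sigma> i) (Poly_Mapping.lookup m i))"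

definition rename :: "(nat \<Rightarrow> nat) \<Rightarrow> mpoly \<Rightarrow> mpoly" where
  "rename \<sigma> p = (\<Sum>m\<in>Poly_Mapping.keys p. Poly_Mapping.single (rename_mono \<sigma> m) (Poly_Mapping.lookup p m))"

definition sk :: "nat \<Rightarrow> nat \<Rightarrow> nat" where
  "sk k i = (if i = k then Suc k else if i = Suc k then k else i)"

text \<open>Divided difference: the (unique, since mpoly is a domain) q with
(x_k - x_(k+1)) * q = p - s_k p.\<close>
definition divdiff :: "nat \<Rightarrow> mpoly \<Rightarrow> mpoly" where
  "divdiff k p = (THE q. (Var k - Var (Suc k)) * q = p - rename (sk k) p)"

text \<open>partial_(c[j]) = partial_j partial_(j+1) ... partial_(n-1)  (identity for j = n).\<close>
definition dc :: "nat \<Rightarrow> nat \<Rightarrow> mpoly \<Rightarrow> mpoly" where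
  "dc n j p = foldr divdiff [j..<n] p"

definition symmetric_first :: "nat \<Rightarrow> mpoly \<Rightarrow> bool" where
  "symmetric_first n p \<longleftrightarrow> (\<forall>\<sigma>. \<sigma> permutes {1..n-1} \<longrightarrow> rename \<sigma> p = p)"

definition admissible :: "nat \<Rightarrow> (nat \<Rightarrow> mpoly) \<Rightarrow> bool" where
  "admissible n p \<longleftrightarrow> (\<forall>j\<in>{1..n}. in_ring n (p j) \<and> symmetric_first n (p j)
      \<and> homogeneous (n - j) (p j) \<and> (\<exists>c. c \<noteq> 0 \<and> dc n j (p j) = const c))"

definition mat_in_ring :: "nat \<Rightarrow> (nat \<Rightarrow> nat \<Rightarrow> mpoly) \<Rightarrow> bool" where
  "mat_in_ring n A \<longleftrightarrow> (\<forall>i\<in>{1..n}. \<forall>j\<in>{1..n}. in_ring n (A i j))"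

definition mat_mult :: "nat \<Rightarrow> (nat \<Rightarrow> nat \<Rightarrow> mpoly) \<Rightarrow> (nat \<Rightarrow> nat \<Rightarrow> mpoly) \<Rightarrow> nat \<Rightarrow> nat \<Rightarrow> mpoly" where
  "mat_mult n A B i j = (\<Sum>l\<in>{1..n}. A i l * B l j)"

definition invertible_over :: "nat \<Rightarrow> (nat \<Rightarrow> nat \<Rightarrow> mpoly) \<Rightarrow> bool" where
  "invertible_over n A \<longleftrightarrow> (\<exists>B. mat_in_ring n B \<and>
     (\<forall>i\<in>{1..n}. \<forall>j\<in>{1..n}. mat_mult n A B i j = (if i = j then 1 else 0)
                             \<and> mat_mult n B A i j = (if i = j then 1 else 0)))"

text \<open>Entrywise divided difference equals gamma_k: column k moved to column k+1, others zero.\<close>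
definition dd_gamma :: "nat \<Rightarrow> nat \<Rightarrow> (nat \<Rightarrow> nat \<Rightarrow> mpoly) \<Rightarrow> bool" where
  "dd_gamma n k A \<longleftrightarrow> (\<forall>i\<in>{1..n}. \<forall>j\<in>{1..n}.
      divdiff k (A i j) = (if j = Suc k then A i k else 0))"

end

theory Submission
  imports Defs
begin

lemma pm_expand:
  fixes p :: "'a \<Rightarrow>\<^sub>0 'b::comm_monoid_add"
  shows "p = (\<Sum>k\<in>Poly_Mapping.keys p. Poly_Mapping.single k (Poly_Mapping.lookup p k))"
proof (rule poly_mapping_eqI)
  fix k
  show "Poly_Mapping.lookup p k = Poly_Mapping.lookup (\<Sum>k\<in>Poly_Mapping.keys p. Poly_Mapping.single k (Poly_Mapping.lookup p k)) k"
    by (auto simp: lookup_sum lookup_single when_def in_keys_iff)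
qed

lemma sum_keys_sup:
  fixes p :: "'a \<Rightarrow>\<^sub>0 'b::zero" and f :: "'a \<Rightarrow> 'b \<Rightarrow> 'c::comm_monoid_add"
  assumes "finite S" "Poly_Mapping.keys p \<subseteq> S" "\<And>k. f k 0 = 0"
  shows "(\<Sum>k\<in>Poly_Mapping.keys p. f k (Poly_Mapping.lookup p k)) = (\<Sum>k\<in>S. f k (Poly_Mapping.lookup p k))"
  by (rule sum.mono_neutral_left) (use assms in \<open>auto simp: in_keys_iff\<close>)

lemma rm_alt: "finite S \<Longrightarrow> Poly_Mapping.keys m \<subseteq> S \<Longrightarrow>
  rename_mono \<sigma> m = (\<Sum>i\<in>S. Poly_Mapping.single (\<sigma> i) (Poly_Mapping.lookup m i))"
  unfolding rename_mono_def by (rule sum_keys_sup) auto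

lemma rm_add: "rename_mono \<sigma> (m + m') = rename_mono \<sigma> m + rename_mono \<sigma> m'"
proof -
  let ?S = "Poly_Mapping.keys m \<union> Poly_Mapping.keys m'"
  have "rename_mono \<sigma> (m + m') = (\<Sum>i\<in>?S. Poly_Mapping.single (\<sigma> i) (Poly_Mapping.lookup (m+m') i))"
    by (rule rm_alt) (auto simp: keys_add)
  also have "\<dots> = (\<Sum>i\<in>?S. Poly_Mapping.single (\<sigma> i) (Poly_Mapping.lookup m i)) + (\<Sum>i\<in>?S. Poly_Mapping.single (\<sigma> i) (Poly_Mapping.lookup m' i))"
    by (simp add: lookup_add single_add sum.distrib)
  also have "\<dots> = rename_mono \<sigma> m + rename_mono \<sigma> m'"
    by (simp add: rm_alt[of ?S m] rm_alt[of ?S m'])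
  finally show ?thesis .
qed

lemma rm_zero[simp]: "rename_mono \<sigma> 0 = 0"
  by (simp add: rename_mono_def)

lemma rm_single[simp]: "rename_mono \<sigma> (Poly_Mapping.single i e) = Poly_Mapping.single (\<sigma> i) e"
  by (simp add: rename_mono_def)

lemma rm_sum: "rename_mono \<sigma> (sum f A) = (\<Sum>a\<in>A. rename_mono \<sigma> (f a))"
  by (induction A rule: infinite_finite_induct) (auto simp: rm_add)

lemma rm_comp: "rename_mono f (rename_mono g m) = rename_mono (f \<circ> g) m"
proof -
  have "rename_mono f (rename_mono g m) = (\<Sum>i\<in>Poly_Mapping.keys m. rename_mono f (Poly_Mapping.single (g i) (Poly_Mapping.lookup m i)))"
    by (simp only: rename_mono_def[of g] rm_sum)
  also have "\<dots> = rename_mono (f \<circ> g) m"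
    by (simp add: rename_mono_def[of "f \<circ> g"])
  finally show ?thesis .
qed

lemma rm_id: "rename_mono id m = m"
  by (simp add: rename_mono_def pm_expand[symmetric])

lemma rn_alt: "finite S \<Longrightarrow> Poly_Mapping.keys p \<subseteq> S \<Longrightarrow>
  rename \<sigma> p = (\<Sum>m\<in>S. Poly_Mapping.single (rename_mono \<sigma> m) (Poly_Mapping.lookup p m))"
  unfolding rename_def by (rule sum_keys_sup) auto

lemma rn_add: "rename \<sigma> (p + q) = rename \<sigma> p + rename \<sigma> q"
proof -
  let ?S = "Poly_Mapping.keys p \<union> Poly_Mapping.keys q"
  have "rename \<sigma> (p + q) = (\<Sum>i\<in>?S. Poly_Mapping.single (rename_mono \<sigma> i) (Poly_Mapping.lookup (p+q) i))"
    by (rule rn_alt) (auto simp: keys_add)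
  also have "\<dots> = (\<Sum>i\<in>?S. Poly_Mapping.single (rename_mono \<sigma> i) (Poly_Mapping.lookup p i)) + (\<Sum>i\<in>?S. Poly_Mapping.single (rename_mono \<sigma> i) (Poly_Mapping.lookup q i))"
    by (simp add: lookup_add single_add sum.distrib)
  also have "\<dots> = rename \<sigma> p + rename \<sigma> q"
    by (simp add: rn_alt[of ?S p] rn_alt[of ?S q])
  finally show ?thesis .
qed

lemma rn_zero[simp]: "rename \<sigma> 0 = 0"
  by (simp add: rename_def)

lemma rn_single[simp]: "rename \<sigma> (Poly_Mapping.single m c) = Poly_Mapping.single (rename_mono \<sigma> m) c"
  by (simp add: rename_def)

lemma rn_sum: "rename \<sigma> (sum f A) = (\<Sum>a\<in>A. rename \<sigma> (f a))"
  by (induction A rule: infinite_finite_induct) (auto simp: rn_add)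

lemma rn_comp: "rename f (rename g p) = rename (f \<circ> g) p"
proof -
  have "rename f (rename g p) = (\<Sum>m\<in>Poly_Mapping.keys p. rename f (Poly_Mapping.single (rename_mono g m) (Poly_Mapping.lookup p m)))"
    by (simp only: rename_def[of g] rn_sum)
  also have "\<dots> = rename (f \<circ> g) p"
    by (simp add: rm_comp rename_def[of "f \<circ> g"])
  finally show ?thesis .
qed

lemma rn_id: "rename id p = p"
  by (simp add: rename_def rm_id pm_expand[symmetric])

lemma rn_uminus: "rename \<sigma> (- p) = - rename \<sigma> p"
proof -
  have "rename \<sigma> p + rename \<sigma> (- p) = 0" by (simp flip: rn_add)
  then show ?thesis by (metis add.inverse_unique)
qed

lemma rn_diff: "rename \<sigma> (p - q) = rename \<sigma> p - rename \<sigma> q"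
  by (simp only: diff_conv_add_uminus rn_add rn_uminus)

lemma rn_mult: "rename \<sigma> (p * q) = rename \<sigma> p * rename \<sigma> q"
proof -
  have "p * q = (\<Sum>a\<in>Poly_Mapping.keys p. \<Sum>b\<in>Poly_Mapping.keys q.
      Poly_Mapping.single a (Poly_Mapping.lookup p a) * Poly_Mapping.single b (Poly_Mapping.lookup q b))"
    by (subst pm_expand[of p], subst pm_expand[of q]) (rule sum_product)
  then have "rename \<sigma> (p * q) = (\<Sum>a\<in>Poly_Mapping.keys p. \<Sum>b\<in>Poly_Mapping.keys q.
      rename \<sigma> (Poly_Mapping.single a (Poly_Mapping.lookup p a)) * rename \<sigma> (Poly_Mapping.single b (Poly_Mapping.lookup q b)))"
    by (simp add: rn_sum mult_single rm_add)
  also have "\<dots> = (\<Sum>a\<in>Poly_Mapping.keys p. rename \<sigma> (Poly_Mapping.single a (Poly_Mapping.lookup p a))) *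
      (\<Sum>b\<in>Poly_Mapping.keys q. rename \<sigma> (Poly_Mapping.single b (Poly_Mapping.lookup q b)))"
    by (rule sum_product[symmetric])
  also have "\<dots> = rename \<sigma> p * rename \<sigma> q"
    unfolding rn_single by (simp only: rename_def)
  finally show ?thesis .
qed

lemma rn_one[simp]: "rename \<sigma> 1 = 1"
  by (metis rm_zero rn_single single_one)

lemma rn_Var[simp]: "rename \<sigma> (Var i) = Var (\<sigma> i)"
  by (simp add: Var_def)

lemma rn_const[simp]: "rename \<sigma> (const c) = const c"
  by (simp add: const_def)

lemma rn_power: "rename \<sigma> (p ^ e) = rename \<sigma> p ^ e"
  by (induction e) (auto simp: rn_mult)

lemmas rn_simps = rn_add rn_diff rn_mult rn_uminus rn_comp rn_power


lemma Var_inj: "Var i = Var j \<longleftrightarrow> i = j"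
proof
  assume "Var i = Var j"
  then have "Poly_Mapping.lookup (Var i) (Poly_Mapping.single i 1) = Poly_Mapping.lookup (Var j) (Poly_Mapping.single i 1)"
    by simp
  then have "Poly_Mapping.single j (1::nat) = Poly_Mapping.single i 1"
    by (auto simp: Var_def lookup_single when_def split: if_splits)
  then have "Poly_Mapping.lookup (Poly_Mapping.single j (1::nat)) i = Poly_Mapping.lookup (Poly_Mapping.single i 1) i"
    by simp
  then show "i = j" by (auto simp: lookup_single when_def split: if_splits)
qed simp

lemma Var_diff_nz: "i \<noteq> j \<Longrightarrow> Var i - Var j \<noteq> 0"
  by (simp add: Var_inj)

lemma single_single_pow: "(Poly_Mapping.single (Poly_Mapping.single a b) (1::rat) :: mpoly) = Var a ^ b"
proof (induction b)
  case 0
  then show ?case by simp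
next
  case (Suc b)
  have "Poly_Mapping.single a (Suc b) = Poly_Mapping.single a b + Poly_Mapping.single a (1::nat)"
    by (simp add: single_add[symmetric])
  then have "(Poly_Mapping.single (Poly_Mapping.single a (Suc b)) (1::rat) :: mpoly)
      = Poly_Mapping.single (Poly_Mapping.single a b) 1 * Var a"
    by (simp add: Var_def mult_single)
  then show ?case using Suc by simp
qed

lemma update_as_add: "a \<notin> Poly_Mapping.keys f \<Longrightarrow> Poly_Mapping.update a b f = f + Poly_Mapping.single a b"
  by (rule poly_mapping_eqI) (auto simp: lookup_update lookup_add lookup_single when_def in_keys_iff)

lemma dvd_sw: "(Var k - Var (Suc k)) dvd (p - rename (sk k) p)"
proof -
  define P where "P p \<longleftrightarrow> (Var k - Var (Suc k)) dvd (p - rename (sk k) p)" for p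
  have Padd: "P (p + q)" if "P p" "P q" for p q
  proof -
    have "p + q - rename (sk k) (p + q) = (p - rename (sk k) p) + (q - rename (sk k) q)"
      by (simp add: rn_add)
    then show ?thesis using that unfolding P_def by (metis dvd_add)
  qed
  have Pmult: "P (p * q)" if "P p" "P q" for p q
  proof -
    have "p * q - rename (sk k) (p * q) = (p - rename (sk k) p) * q + rename (sk k) p * (q - rename (sk k) q)"
      by (simp add: rn_mult algebra_simps)
    then show ?thesis using that unfolding P_def by (metis dvd_add dvd_mult dvd_mult2)
  qed
  have P1: "P 1" by (simp add: P_def)
  have Pc: "P (Poly_Mapping.single 0 c)" for c by (simp add: P_def)
  have PV: "P (Var i)" for i
  proof -
    have e: "Var i - rename (sk k) (Var i) = Var i - Var (sk k i)" by simp
    consider "i = k" | "i = Suc k" | "i \<noteq> k" "i \<noteq> Suc k" by blast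
    then show ?thesis
    proof cases
      case 1 then show ?thesis unfolding P_def e by (simp add: sk_def)
    next
      case 2
      then have "Var i - Var (sk k i) = - (Var k - Var (Suc k))" by (simp add: sk_def)
      then show ?thesis unfolding P_def e by (simp only: dvd_minus_iff dvd_refl)
    next
      case 3 then show ?thesis unfolding P_def e by (simp add: sk_def)
    qed
  qed
  have Ppow: "P (q ^ e)" if "P q" for q e
    using that by (induction e) (auto simp: P1 Pmult)
  have Pmono: "P (Poly_Mapping.single m 1)" for m
  proof (induction m rule: update_induct)
    case const
    then show ?case using P1 by simp
  next
    case (update f a b)
    have "Poly_Mapping.single (Poly_Mapping.update a b f) (1::rat) = Poly_Mapping.single f 1 * Var a ^ b"
      using update(1) by (simp add: update_as_add mult_single single_single_pow[symmetric])
    then show ?case using update(3) Pmult Ppow PV by simp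
  qed
  have Pterm: "P (Poly_Mapping.single m c)" for m c
  proof -
    have "Poly_Mapping.single m c = Poly_Mapping.single 0 c * (Poly_Mapping.single m 1 :: mpoly)"
      by (simp add: mult_single)
    then show ?thesis using Pmult Pc Pmono by metis
  qed
  have Psum: "P (sum f A)" if "\<And>a. P (f a)" for f :: "_ \<Rightarrow> mpoly" and A
    using that by (induction A rule: infinite_finite_induct) (simp_all add: Padd, simp_all add: P_def)
  have "P p"
    by (subst pm_expand) (rule Psum, rule Pterm)
  then show ?thesis by (simp add: P_def)
qed

lemma dd_eq: "(Var k - Var (Suc k)) * divdiff k p = p - rename (sk k) p"
proof -
  obtain q where q: "p - rename (sk k) p = (Var k - Var (Suc k)) * q"
    using dvd_sw by (metis dvdE)
  have nz: "Var k - Var (Suc k) \<noteq> 0" using Var_diff_nz[of k "Suc k"] by simp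
  have "\<exists>!q. (Var k - Var (Suc k)) * q = p - rename (sk k) p"
    using q nz by (metis mult_left_cancel)
  from theI'[OF this] show ?thesis unfolding divdiff_def .
qed

lemma dd_unique: "(Var k - Var (Suc k)) * q = p - rename (sk k) p \<Longrightarrow> divdiff k p = q"
  using dd_eq[of k p] Var_diff_nz[of k "Suc k"] by (metis mult_left_cancel n_not_Suc_n)

lemma sk_invol[simp]: "sk k \<circ> sk k = id"
  by (rule ext) (simp add: sk_def)

lemma sk_far: "Suc (Suc k) \<le> m \<or> Suc (Suc m) \<le> k \<Longrightarrow> sk k \<circ> sk m = sk m \<circ> sk k"
  by (rule ext) (auto simp: sk_def)

lemma sk_braid: "sk a \<circ> (sk (Suc a) \<circ> sk a) = sk (Suc a) \<circ> (sk a \<circ> sk (Suc a))"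
  by (rule ext) (auto simp: sk_def)

lemma sw_sw[simp]: "rename (sk k) (rename (sk k) p) = p"
  by (simp add: rn_comp rn_id)

lemma dd_zero_iff: "divdiff k p = 0 \<longleftrightarrow> rename (sk k) p = p"
proof
  assume "divdiff k p = 0"
  then show "rename (sk k) p = p" using dd_eq[of k p] by simp
next
  assume "rename (sk k) p = p"
  then show "divdiff k p = 0" by (intro dd_unique) simp
qed

lemma dd_inv: "rename (sk k) (divdiff k p) = divdiff k p"
proof -
  define q where "q = divdiff k p"
  have e: "(Var k - Var (Suc k)) * q = p - rename (sk k) p" using dd_eq q_def by simp
  have "rename (sk k) ((Var k - Var (Suc k)) * q) = rename (sk k) (p - rename (sk k) p)"
    using e by simp
  then have "(Var (Suc k) - Var k) * rename (sk k) q = rename (sk k) p - p"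
    by (simp add: rn_mult rn_diff sk_def del: rn_comp)
  then have "(Var k - Var (Suc k)) * rename (sk k) q = (Var k - Var (Suc k)) * q"
    using e by (metis minus_diff_eq mult_minus_left)
  then show ?thesis using Var_diff_nz[of k "Suc k"] q_def by simp
qed

lemma dd_comm:
  assumes far: "Suc (Suc k) \<le> m \<or> Suc (Suc m) \<le> k"
  shows "rename (sk k) (divdiff m p) = divdiff m (rename (sk k) p)"
proof -
  have e: "(Var m - Var (Suc m)) * divdiff m p = p - rename (sk m) p" by (rule dd_eq)
  have "rename (sk k) ((Var m - Var (Suc m)) * divdiff m p) = rename (sk k) (p - rename (sk m) p)"
    using e by simp
  moreover have "rename (sk k) (rename (sk m) p) = rename (sk m) (rename (sk k) p)"
    by (simp add: rn_comp sk_far[OF far])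
  moreover have "sk k m = m" "sk k (Suc m) = Suc m" using far by (auto simp: sk_def)
  ultimately have "(Var m - Var (Suc m)) * rename (sk k) (divdiff m p) = rename (sk k) p - rename (sk m) (rename (sk k) p)"
    by (simp add: rn_mult rn_diff del: rn_comp)
  then show ?thesis by (rule dd_unique[symmetric])
qed

lemma braid_inv:
  assumes ra: "rename (sk a) r = r"
  shows "rename (sk (Suc a)) (divdiff a (divdiff (Suc a) r)) = divdiff a (divdiff (Suc a) r)"
proof -
  define b where "b = Suc a"
  define x1 where "x1 = Var a"
  define x2 where "x2 = Var b"
  define x3 where "x3 = Var (Suc b)"
  define u where "u = divdiff b r"
  define t where "t = divdiff a u"
  define R1 where "R1 = rename (sk b) r"
  define R2 where "R2 = rename (sk a) R1"
  have h1: "(x2 - x3) * u = r - R1" unfolding x2_def x3_def u_def R1_def by (rule dd_eq)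
  have h2: "(x1 - x2) * t = u - rename (sk a) u" unfolding x1_def x2_def t_def b_def by (rule dd_eq)
  have "rename (sk a) ((x2 - x3) * u) = rename (sk a) (r - R1)" using h1 by simp
  then have h3: "(x1 - x3) * rename (sk a) u = r - R2"
    unfolding R2_def by (simp add: rn_mult rn_diff ra x1_def x2_def x3_def b_def sk_def del: rn_comp)
  define D where "D = (x1 - x2) * (x1 - x3) * (x2 - x3)"
  have h4: "D * t = (x1 - x3) * (r - R1) - (x2 - x3) * (r - R2)"
  proof -
    have "D * t = (x1 - x3) * (x2 - x3) * ((x1 - x2) * t)" by (simp add: D_def ac_simps)
    also have "\<dots> = (x1 - x3) * (x2 - x3) * (u - rename (sk a) u)" by (simp only: h2)
    also have "\<dots> = (x1 - x3) * ((x2 - x3) * u) - (x2 - x3) * ((x1 - x3) * rename (sk a) u)"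
      by (simp add: algebra_simps)
    also have "\<dots> = (x1 - x3) * (r - R1) - (x2 - x3) * (r - R2)" by (simp only: h1 h3)
    finally show ?thesis .
  qed
  have hR1: "rename (sk b) R1 = r" unfolding R1_def by simp
  have hR2: "rename (sk b) R2 = R2"
  proof -
    have "rename (sk b) R2 = rename (sk b \<circ> (sk a \<circ> sk b)) r"
      unfolding R2_def R1_def by (simp add: rn_comp)
    also have "\<dots> = rename (sk a \<circ> (sk b \<circ> sk a)) r" unfolding b_def by (simp only: sk_braid)
    also have "\<dots> = R2" unfolding R2_def R1_def by (simp add: rn_comp[symmetric] ra)
    finally show ?thesis .
  qed
  have "rename (sk b) (D * t) = rename (sk b) ((x1 - x3) * (r - R1) - (x2 - x3) * (r - R2))"
    using h4 by simp
  then have h5: "(x1 - x3) * (x1 - x2) * (x3 - x2) * rename (sk b) t = (x1 - x2) * (R1 - r) - (x3 - x2) * (R1 - R2)"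
    unfolding D_def by (simp add: rn_mult rn_diff hR1 hR2 del: rn_comp,
        simp add: x1_def x2_def x3_def b_def sk_def R1_def)
  have "D * rename (sk b) t = D * t"
    using h4 h5 unfolding D_def by algebra
  moreover have "D \<noteq> 0" unfolding D_def x1_def x2_def x3_def b_def by (simp add: Var_inj)
  ultimately have "rename (sk b) t = t" by simp
  then show ?thesis unfolding t_def u_def b_def .
qed

lemma dc_step: "j < n \<Longrightarrow> dc n j p = divdiff j (dc n (Suc j) p)"
  by (simp add: dc_def upt_conv_Cons)

lemma dc_n[simp]: "dc n n p = p"
  by (simp add: dc_def)

lemma dc_split: "j \<le> l \<Longrightarrow> l \<le> n \<Longrightarrow> dc n j p = foldr divdiff [j..<l] (dc n l p)"
proof -
  assume a: "j \<le> l" "l \<le> n"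
  have "[j..<n] = [j..<l] @ [l..<n]"
    using upt_add_eq_append[of j l "n - l"] a by simp
  then show ?thesis by (simp add: dc_def)
qed

lemma foldr_inv:
  "(\<forall>m\<in>set ms. Suc (Suc k) \<le> m \<or> Suc (Suc m) \<le> k) \<Longrightarrow> rename (sk k) q = q \<Longrightarrow>
   rename (sk k) (foldr divdiff ms q) = foldr divdiff ms q"
  by (induction ms) (auto simp: dd_comm)

lemma sk_transpose: "sk k = Transposition.transpose k (Suc k)"
  by (rule ext) (simp add: sk_def Transposition.transpose_def)

lemma sym_sk: "symmetric_first n p \<Longrightarrow> 1 \<le> k \<Longrightarrow> Suc k \<le> n - 1 \<Longrightarrow> rename (sk k) p = p"
proof -
  assume a: "symmetric_first n p" "1 \<le> k" "Suc k \<le> n - 1"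
  have "Transposition.transpose k (Suc k) permutes {1..n-1}"
    by (rule permutes_swap_id) (use a in auto)
  then show ?thesis using a(1) unfolding symmetric_first_def sk_transpose by blast
qed

lemma part1:
  assumes adm: "admissible n p" and k: "k \<in> {1..<n}"
  shows "dd_gamma n k (\<lambda>i j. dc n j (p i))"
  unfolding dd_gamma_def
proof (intro ballI)
  fix i j assume i: "i \<in> {1..n}" and j: "j \<in> {1..n}"
  define q where "q = p i"
  have symq: "symmetric_first n q" using adm i unfolding admissible_def q_def by auto
  show "divdiff k (dc n j (p i)) = (if j = Suc k then dc n k (p i) else 0)"
  proof (cases "j = Suc k")
    case True
    then show ?thesis using k dc_step[of k n q] by (simp add: q_def)
  next
    case False
    have "rename (sk k) (dc n j q) = dc n j q"
    proof -
      consider "Suc (Suc k) \<le> j" | "j = k" | "j < k" using False by linarith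
      then show ?thesis
      proof cases
        case 1
        then show ?thesis unfolding dc_def
          using j k by (intro foldr_inv sym_sk[OF symq]) auto
      next
        case 2
        then show ?thesis using k dc_step[of k n q] dd_inv by simp
      next
        case 3
        define a where "a = k - 1"
        have ka: "k = Suc a" using 3 j unfolding a_def by auto
        have r: "rename (sk a) (dc n (Suc k) q) = dc n (Suc k) q"
          unfolding dc_def using k ka 3 j by (intro foldr_inv sym_sk[OF symq]) auto
        have da: "dc n a q = divdiff a (divdiff k (dc n (Suc k) q))"
          using k ka dc_step[of a n q] dc_step[of k n q] by simp
        have "rename (sk k) (dc n a q) = dc n a q"
          unfolding da ka using braid_inv r ka by simp
        moreover have "dc n j q = foldr divdiff [j..<a] (dc n a q)"
          using 3 k ka by (intro dc_split) auto
        ultimately show ?thesis using ka by (auto intro: foldr_inv)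
      qed
    qed
    then show ?thesis using False by (simp add: dd_zero_iff q_def)
  qed
qed

lemma Q_dc:
  assumes dd: "\<forall>k\<in>{1..<n}. dd_gamma n k Q" and j: "j \<in> {1..n}" and i: "i \<in> {1..n}"
  shows "Q i j = dc n j (Q i n)"
proof -
  have "\<forall>j. j \<in> {1..n} \<longrightarrow> n - j = d \<longrightarrow> Q i j = dc n j (Q i n)" for d
  proof (induction d)
    case 0
    then show ?case by auto
  next
    case (Suc d)
    show ?case
    proof (intro allI impI)
      fix j assume j: "j \<in> {1..n}" and e: "n - j = Suc d"
      have jn: "j < n" using e by auto
      have g: "dd_gamma n j Q" using dd jn j by auto
      have "Suc j \<in> {1..n}" using jn by auto
      then have "divdiff j (Q i (Suc j)) = (if Suc j = Suc j then Q i j else 0)"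
        using g[unfolded dd_gamma_def, rule_format, OF i] by blast
      then have "divdiff j (Q i (Suc j)) = Q i j" by simp
      moreover have "Q i (Suc j) = dc n (Suc j) (Q i n)"
        using Suc.IH jn j e by auto
      ultimately show "Q i j = dc n j (Q i n)" using dc_step[OF jn] by simp
    qed
  qed
  then show ?thesis using j by blast
qed

lemma mdeg0: "mdeg m = 0 \<Longrightarrow> m = 0"
proof -
  assume "mdeg m = 0"
  then have "\<forall>i\<in>Poly_Mapping.keys m. Poly_Mapping.lookup m i = 0"
    unfolding mdeg_def by simp
  then have "\<forall>i. Poly_Mapping.lookup m i = 0" by (auto simp: in_keys_iff)
  then show "m = 0" by (intro poly_mapping_eqI) simp
qed

lemma hom0_const: "homogeneous 0 p \<Longrightarrow> p = const (Poly_Mapping.lookup p 0)"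
  unfolding const_def
proof (rule poly_mapping_eqI)
  fix m assume h: "homogeneous 0 p"
  show "Poly_Mapping.lookup p m = Poly_Mapping.lookup (Poly_Mapping.single 0 (Poly_Mapping.lookup p 0)) m"
  proof (cases "m = 0")
    case False
    then have "m \<notin> Poly_Mapping.keys p" using h mdeg0 unfolding homogeneous_def by blast
    then show ?thesis using False by (simp add: in_keys_iff lookup_single when_def)
  qed simp
qed

lemma hom_pos_0: "homogeneous d p \<Longrightarrow> d > 0 \<Longrightarrow> Poly_Mapping.lookup p 0 = 0"
proof -
  assume "homogeneous d p" "d > 0"
  then have "0 \<notin> Poly_Mapping.keys p" unfolding homogeneous_def mdeg_def by auto
  then show ?thesis by (simp add: in_keys_iff)
qed

lemma add_eq0_left: "(a :: nat \<Rightarrow>\<^sub>0 nat) + b = 0 \<Longrightarrow> a = 0"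
proof -
  assume h: "a + b = 0"
  show "a = 0"
  proof (rule poly_mapping_eqI)
    fix i
    have "Poly_Mapping.lookup (a + b) i = 0" using h by simp
    then show "Poly_Mapping.lookup a i = Poly_Mapping.lookup 0 i" by (simp add: lookup_add)
  qed
qed

lemma lookup0_nokey: "0 \<notin> Poly_Mapping.keys (q :: mpoly) \<Longrightarrow> Poly_Mapping.lookup (p * q) 0 = 0"
proof -
  assume q: "0 \<notin> Poly_Mapping.keys q"
  have "0 \<notin> Poly_Mapping.keys (p * q)"
  proof
    assume "0 \<in> Poly_Mapping.keys (p * q)"
    then obtain a b where "0 = a + b" "b \<in> Poly_Mapping.keys q" using keys_mult by blast
    then have "b = 0" using add_eq0_left[of b a] by (simp add: add.commute)
    then show False using q \<open>b \<in> _\<close> by simp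
  qed
  then show ?thesis by (simp add: in_keys_iff)
qed

lemma lookup0_mult: "Poly_Mapping.lookup ((p :: mpoly) * q) 0 = Poly_Mapping.lookup p 0 * Poly_Mapping.lookup q 0"
proof -
  define c where "c = Poly_Mapping.lookup p 0"
  define d where "d = Poly_Mapping.lookup q 0"
  define p' where "p' = p - Poly_Mapping.single 0 c"
  define q' where "q' = q - Poly_Mapping.single 0 d"
  have p'0: "0 \<notin> Poly_Mapping.keys p'" unfolding p'_def c_def by (simp add: in_keys_iff lookup_minus)
  have q'0: "0 \<notin> Poly_Mapping.keys q'" unfolding q'_def d_def by (simp add: in_keys_iff lookup_minus)
  have "p * q = Poly_Mapping.single 0 c * Poly_Mapping.single 0 d + Poly_Mapping.single 0 c * q'
      + Poly_Mapping.single 0 d * p' + p' * q'"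
    unfolding p'_def q'_def by (simp add: algebra_simps)
  then have "Poly_Mapping.lookup (p * q) 0 = c * d"
    using lookup0_nokey[OF q'0] lookup0_nokey[OF p'0] by (simp add: lookup_add mult_single)
  then show ?thesis by (simp add: c_def d_def)
qed

lemma diag_nz:
  assumes inv: "invertible_over n Q"
    and tri: "\<forall>i\<in>{1..n}. \<forall>j\<in>{1..n}. (i \<le> j \<longrightarrow> homogeneous (j - i) (Q i j)) \<and> (j < i \<longrightarrow> Q i j = 0)"
    and j: "j \<in> {1..n}"
  shows "Poly_Mapping.lookup (Q j j) 0 \<noteq> 0"
proof -
  obtain B where B: "\<forall>i\<in>{1..n}. \<forall>j\<in>{1..n}. mat_mult n B Q i j = (if i = j then 1 else 0)"
    using inv unfolding invertible_over_def by blast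
  have "mat_mult n B Q j j = 1" using B j by simp
  then have "Poly_Mapping.lookup (\<Sum>l\<in>{1..n}. B j l * Q l j) 0 = 1"
    unfolding mat_mult_def by simp
  then have s: "(\<Sum>l\<in>{1..n}. Poly_Mapping.lookup (B j l) 0 * Poly_Mapping.lookup (Q l j) 0) = 1"
    by (simp add: lookup_sum lookup0_mult)
  have z: "Poly_Mapping.lookup (Q l j) 0 = 0" if "l \<in> {1..n}" "l \<noteq> j" for l
  proof (cases "j < l")
    case True then show ?thesis using tri that j by auto
  next
    case False
    then have "l < j" using that by auto
    then show ?thesis using tri that j by (intro hom_pos_0[of "j - l"]) auto
  qed
  have "(\<Sum>l\<in>{1..n}. Poly_Mapping.lookup (B j l) 0 * Poly_Mapping.lookup (Q l j) 0)
      = Poly_Mapping.lookup (B j j) 0 * Poly_Mapping.lookup (Q j j) 0"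
    using j z by (intro sum.delta_remove[THEN trans] | subst sum.remove[OF _ j]) auto
  then show ?thesis using s by auto
qed

lemma transp_inv:
  assumes adj: "\<forall>k. 1 \<le> k \<longrightarrow> Suc k \<le> N \<longrightarrow> rename (sk k) p = p"
  shows "1 \<le> a \<Longrightarrow> Suc a + d \<le> N \<Longrightarrow> rename (Transposition.transpose a (Suc a + d)) p = p"
proof (induction d)
  case 0
  then show ?case using adj by (simp add: sk_transpose[symmetric])
next
  case (Suc d)
  define b where "b = Suc a + d"
  have "Transposition.transpose a (Suc b) = sk b \<circ> (Transposition.transpose a b \<circ> sk b)"
    by (rule ext) (auto simp: sk_def Transposition.transpose_def b_def)
  then have "rename (Transposition.transpose a (Suc b)) p = rename (sk b) (rename (Transposition.transpose a b) (rename (sk b) p))"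
    by (simp add: rn_comp)
  also have "\<dots> = p" using Suc adj unfolding b_def by simp
  finally show ?case by (simp add: b_def)
qed

lemma sym_from_adj:
  assumes adj: "\<forall>k. 1 \<le> k \<longrightarrow> Suc k \<le> N \<longrightarrow> rename (sk k) p = p"
    and sig: "\<sigma> permutes {1..N}"
  shows "rename \<sigma> p = p"
  using sig finite_atLeastAtMost
proof (induction \<sigma> rule: permutes_induct)
  case id
  show ?case by (rule rn_id)
next
  case (swap a b \<sigma>)
  have t: "rename (Transposition.transpose a b) p = p"
  proof (cases "a < b")
    case True
    then obtain d where d: "b = Suc a + d" using less_imp_Suc_add by blast
    have "1 \<le> a" "Suc a + d \<le> N" using swap(1,2) d by auto
    then show ?thesis using transp_inv[OF adj] d by blast
  next
    case False
    then have "b < a" using swap by auto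
    then obtain d where d: "a = Suc b + d" using less_imp_Suc_add by blast
    have "1 \<le> b" "Suc b + d \<le> N" using swap(1,2) d by auto
    then have "rename (Transposition.transpose b a) p = p" using transp_inv[OF adj] d by blast
    then show ?thesis by (simp only: transpose_commute)
  qed
  have "rename (Transposition.transpose a b \<circ> \<sigma>) p = rename (Transposition.transpose a b) (rename \<sigma> p)"
    by (simp only: rn_comp)
  also have "\<dots> = p" using swap t by (simp del: rn_comp)
  finally show ?case .
qed

lemma part2:
  assumes ring: "mat_in_ring n Q" and inv: "invertible_over n Q"
    and tri: "\<forall>i\<in>{1..n}. \<forall>j\<in>{1..n}. (i \<le> j \<longrightarrow> homogeneous (j - i) (Q i j)) \<and> (j < i \<longrightarrow> Q i j = 0)"
    and dd: "\<forall>k\<in>{1..<n}. dd_gamma n k Q"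
  shows "admissible n (\<lambda>i. Q i n) \<and> (\<forall>i\<in>{1..n}. \<forall>j\<in>{1..n}. Q i j = dc n j (Q i n))"
proof
  show "\<forall>i\<in>{1..n}. \<forall>j\<in>{1..n}. Q i j = dc n j (Q i n)"
    using Q_dc[OF dd] by blast
  show "admissible n (\<lambda>i. Q i n)"
    unfolding admissible_def
  proof (intro ballI conjI)
    fix j assume j: "j \<in> {1..n}"
    then have nn: "n \<in> {1..n}" by auto
    show "in_ring n (Q j n)" using ring j nn unfolding mat_in_ring_def by blast
    show "homogeneous (n - j) (Q j n)" using tri j nn by auto
    show "symmetric_first n (Q j n)"
      unfolding symmetric_first_def
    proof (intro allI impI)
      fix \<sigma> :: "nat \<Rightarrow> nat" assume sig: "\<sigma> permutes {1..n-1}"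
      have adj: "\<forall>k. 1 \<le> k \<longrightarrow> Suc k \<le> n - 1 \<longrightarrow> rename (sk k) (Q j n) = Q j n"
      proof (intro allI impI)
        fix k assume k: "1 \<le> k" "Suc k \<le> n - 1"
        then have g: "dd_gamma n k Q" using dd by auto
        have "divdiff k (Q j n) = (if n = Suc k then Q j k else 0)"
          using g[unfolded dd_gamma_def, rule_format, OF j nn] .
        then have "divdiff k (Q j n) = 0" using k by auto
        then show "rename (sk k) (Q j n) = Q j n" by (simp add: dd_zero_iff)
      qed
      show "rename \<sigma> (Q j n) = Q j n" by (rule sym_from_adj[OF adj sig])
    qed
    have "dc n j (Q j n) = Q j j" using Q_dc[OF dd j j] by simp
    also have "\<dots> = const (Poly_Mapping.lookup (Q j j) 0)"
      using tri[rule_format, OF j j] by (intro hom0_const) simp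
    finally show "\<exists>c. c \<noteq> 0 \<and> dc n j (Q j n) = const c"
      using diag_nz[OF inv tri j] by blast
  qed
qed

theorem lemma4p1:
  fixes n :: nat
  shows "(\<forall>p. admissible n p \<longrightarrow>
            (\<forall>k\<in>{1..<n}. dd_gamma n k (\<lambda>i j. dc n j (p i))))
       \<and> (\<forall>Q. mat_in_ring n Q \<and> invertible_over n Q
            \<and> (\<forall>i\<in>{1..n}. \<forall>j\<in>{1..n}. (i \<le> j \<longrightarrow> homogeneous (j - i) (Q i j)) \<and> (j < i \<longrightarrow> Q i j = 0))
            \<and> (\<forall>k\<in>{1..<n}. dd_gamma n k Q)
          \<longrightarrow> admissible n (\<lambda>i. Q i n)
            \<and> (\<forall>i\<in>{1..n}. \<forall>j\<in>{1..n}. Q i j = dc n j (Q i n)))"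
  using part1 part2 by blast

end
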